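(* Let $T=(S,E)$ be a finite tree to which a unique self-loop has been added at one vertex, and consider simple random walk on it. Then its relaxation time satisfies \[ t_{\rm rel}\le \big(2\,\mathrm{diam}(T)+1\big)|E|. \]
   Context: $|E|$ counts the self-loop as one edge. Degrees count the self-loop twice; simple random walk moves from $v$ along a uniformly chosen edge-end at $v$, so it is irreducible, aperiodic and reversible with respect to $\pi(v)=\deg(v)/\sum_z\deg(z)$. If $1=\lambda_1>\lambda_2\ge\dots\ge\lambda_{|S|}>-1$ are the eigenvalues of its transition matrix, the absolute spectral gap is $\gamma_*=1-\max_{i\ge2}|\lambda_i|$ and the relaxation time is $t_{\rm rel}=1/\gamma_*$. $\mathrm{diam}(T)$ is the maximal graph distance between two vertices. *)

theory Defs
  imports "Jordan_Normal_Form.Char_Poly" "HOL-Library.Multiset"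
begin

definition simple_graph :: "nat \<Rightarrow> (nat \<Rightarrow> nat \<Rightarrow> bool) \<Rightarrow> bool" where
  "simple_graph n adj \<longleftrightarrow>
     (\<forall>u v. adj u v \<longrightarrow> u < n \<and> v < n) \<and>
     (\<forall>u v. adj u v \<longrightarrow> adj v u) \<and> (\<forall>u. \<not> adj u u)"

definition is_walk :: "(nat \<Rightarrow> nat \<Rightarrow> bool) \<Rightarrow> nat list \<Rightarrow> bool" where
  "is_walk adj vs \<longleftrightarrow> vs \<noteq> [] \<and> (\<forall>i. Suc i < length vs \<longrightarrow> adj (vs ! i) (vs ! Suc i))"

definition graph_connected :: "nat \<Rightarrow> (nat \<Rightarrow> nat \<Rightarrow> bool) \<Rightarrow> bool" where
  "graph_connected n adj \<longleftrightarrow>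
     (\<forall>u<n. \<forall>v<n. \<exists>vs. is_walk adj vs \<and> hd vs = u \<and> last vs = v)"

definition is_cycle :: "(nat \<Rightarrow> nat \<Rightarrow> bool) \<Rightarrow> nat list \<Rightarrow> bool" where
  "is_cycle adj vs \<longleftrightarrow> length vs \<ge> 3 \<and> distinct vs \<and> is_walk adj vs \<and> adj (last vs) (hd vs)"

definition is_tree :: "nat \<Rightarrow> (nat \<Rightarrow> nat \<Rightarrow> bool) \<Rightarrow> bool" where
  "is_tree n adj \<longleftrightarrow> 0 < n \<and> simple_graph n adj \<and> graph_connected n adj \<and>
     (\<nexists>vs. is_cycle adj vs)"

definition graph_dist :: "(nat \<Rightarrow> nat \<Rightarrow> bool) \<Rightarrow> nat \<Rightarrow> nat \<Rightarrow> nat" where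
  "graph_dist adj u v = (LEAST k. \<exists>vs. is_walk adj vs \<and> hd vs = u \<and> last vs = v \<and> length vs = Suc k)"

definition diam :: "nat \<Rightarrow> (nat \<Rightarrow> nat \<Rightarrow> bool) \<Rightarrow> nat" where
  "diam n adj = Max {graph_dist adj u v | u v. u < n \<and> v < n}"

text \<open>Number of edges of the tree plus the added self-loop at r (counted once).\<close>
definition num_edges_loop :: "nat \<Rightarrow> (nat \<Rightarrow> nat \<Rightarrow> bool) \<Rightarrow> nat" where
  "num_edges_loop n adj = card {(u, v). u < v \<and> v < n \<and> adj u v} + 1"

text \<open>Degree in the tree with a self-loop at r (the loop counts twice).\<close>
definition deg_loop :: "nat \<Rightarrow> (nat \<Rightarrow> nat \<Rightarrow> bool) \<Rightarrow> nat \<Rightarrow> nat \<Rightarrow> nat" where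
  "deg_loop n adj r v = card {w. w < n \<and> adj v w} + (if v = r then 2 else 0)"

text \<open>Transition matrix of simple random walk: move along a uniformly chosen edge-end.\<close>
definition srw_matrix :: "nat \<Rightarrow> (nat \<Rightarrow> nat \<Rightarrow> bool) \<Rightarrow> nat \<Rightarrow> real mat" where
  "srw_matrix n adj r = mat n n (\<lambda>(u, v).
      ((if adj u v then 1 else 0) + (if u = v \<and> u = r then 2 else 0)) / real (deg_loop n adj r u))"

text \<open>Given the eigenvalues with multiplicity (list of roots of the characteristic
  polynomial), the absolute spectral gap 1 - max_{i>=2} |lambda_i|, where lambda_1 = 1
  is removed once from the multiset.\<close>
definition abs_spectral_gap :: "complex list \<Rightarrow> real" where
  "abs_spectral_gap evs = 1 - Max (insert 0 (cmod ` set_mset (mset evs - {#1#})))"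

definition relaxation_time :: "complex list \<Rightarrow> real" where
  "relaxation_time evs = 1 / abs_spectral_gap evs"

end

theory Submission
  imports Defs
begin


lemma walk_shortcut:
  assumes w: "is_walk adj vs" and nd: "\<not> distinct vs"
  shows "\<exists>ws. is_walk adj ws \<and> hd ws = hd vs \<and> last ws = last vs \<and> length ws < length vs"
proof -
  from nd obtain i j where ij: "i < j" "j < length vs" "vs ! i = vs ! j"
    by (metis distinct_conv_nth linorder_neqE_nat)
  define ws where "ws = take (Suc i) vs @ drop (Suc j) vs"
  have len: "length ws = length vs - (j - i)" using ij unfolding ws_def by auto
  have nth1: "\<And>m. m \<le> i \<Longrightarrow> ws ! m = vs ! m" using ij unfolding ws_def
    by (auto simp: nth_append)
  have nth2: "\<And>m. Suc i + m < length ws \<Longrightarrow> ws ! (Suc i + m) = vs ! (Suc j + m)" using ij unfolding ws_def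
    by (auto simp: nth_append)
  have "is_walk adj ws"
    unfolding is_walk_def
  proof (intro conjI allI impI)
    show "ws \<noteq> []" using ij unfolding ws_def by auto
    fix m assume m: "Suc m < length ws"
    have wv: "\<And>m. Suc m < length vs \<Longrightarrow> adj (vs ! m) (vs ! Suc m)" using w unfolding is_walk_def by auto
    consider "Suc m \<le> i" | "m = i" | "m > i" by linarith
    then show "adj (ws ! m) (ws ! Suc m)"
    proof cases
      case 1 then show ?thesis using nth1[of m] nth1[of "Suc m"] wv[of m] ij by auto
    next
      case 2 then show ?thesis using nth1[of m] nth2[of 0] wv[of j] m ij len by auto
    next
      case 3
      then obtain t where t: "m = Suc i + t" by (metis less_imp_Suc_add add_Suc)
      show ?thesis using nth2[of t] nth2[of "Suc t"] wv[of "Suc j + t"] m t len ij by auto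
    qed
  qed
  moreover have "hd ws = hd vs" using ij unfolding ws_def by (cases vs) auto
  moreover have "last ws = last vs"
  proof (cases "Suc j < length vs")
    case True then show ?thesis unfolding ws_def by auto
  next
    case False
    then have j: "j = length vs - 1" using ij by auto
    have vne: "vs \<noteq> []" using ij by auto
    have "ws = take (Suc i) vs" unfolding ws_def using False by simp
    moreover have "i < length vs" using ij by simp
    then have "last (take (Suc i) vs) = vs ! i" by (metis take_Suc_conv_app_nth last_snoc)
    ultimately have "last ws = vs ! i" by simp
    also have "\<dots> = vs ! j" using ij(3) .
    also have "\<dots> = last vs" unfolding j using vne by (simp add: last_conv_nth)
    finally show ?thesis .
  qed
  moreover have "length ws < length vs" using len ij(1,2) by linarith
  ultimately show ?thesis by blast
qed

lemma shortest_path: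
  assumes "graph_connected n adj" "u < n" "v < n"
  shows "\<exists>p. is_walk adj p \<and> hd p = u \<and> last p = v \<and> distinct p \<and> length p = Suc (graph_dist adj u v)"
proof -
  let ?Q = "\<lambda>k. \<exists>vs. is_walk adj vs \<and> hd vs = u \<and> last vs = v \<and> length vs = Suc k"
  obtain vs where vs: "is_walk adj vs" "hd vs = u" "last vs = v"
    using assms unfolding graph_connected_def by blast
  then have "?Q (length vs - 1)" unfolding is_walk_def by (intro exI[of _ vs]) auto
  then have "?Q (graph_dist adj u v)" unfolding graph_dist_def by (rule LeastI)
  then obtain p where p: "is_walk adj p" "hd p = u" "last p = v" "length p = Suc (graph_dist adj u v)" by blast
  have "distinct p"
  proof (rule ccontr)
    assume "\<not> distinct p"
    from walk_shortcut[OF p(1) this] obtain ws where ws: "is_walk adj ws" "hd ws = u" "last ws = v" "length ws < length p"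
      using p by auto
    then have "?Q (length ws - 1)" unfolding is_walk_def by (intro exI[of _ ws]) auto
    then have "graph_dist adj u v \<le> length ws - 1" unfolding graph_dist_def by (rule Least_le)
    then show False using ws p unfolding is_walk_def by (cases ws) auto
  qed
  then show ?thesis using p by blast
qed

lemma dist_le_diam:
  assumes "u < n" "v < n"
  shows "graph_dist adj u v \<le> diam n adj"
proof -
  have fin: "finite {graph_dist adj u v | u v. u < n \<and> v < n}"
  proof -
    have "{graph_dist adj u v | u v. u < n \<and> v < n} = (\<lambda>(u,v). graph_dist adj u v) ` ({..<n} \<times> {..<n})" by auto
    then show ?thesis by simp
  qed
  show ?thesis unfolding diam_def by (rule Max_ge[OF fin]) (use assms in blast)
qed

lemma walk_nth_lt:
  assumes sg: "simple_graph n adj" and w: "is_walk adj p" and h: "hd p < n" and i: "i < length p"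
  shows "p ! i < n"
proof (cases i)
  case 0 then show ?thesis using h w unfolding is_walk_def by (cases p) auto
next
  case (Suc j)
  then have "adj (p ! j) (p ! i)" using w i unfolding is_walk_def by auto
  then show ?thesis using sg unfolding simple_graph_def by blast
qed

lemma path_sum_bound:
  fixes h :: "nat \<Rightarrow> nat \<Rightarrow> real"
  assumes sg: "simple_graph n adj" and w: "is_walk adj p" and dp: "distinct p"
    and hsym: "\<And>x y. h x y = h y x" and hnn: "\<And>x y. h x y \<ge> 0"
  shows "2 * (\<Sum>i<length p - 1. h (p ! i) (p ! Suc i)) \<le> (\<Sum>x<n. \<Sum>y<n. if adj x y then h x y else 0)"
proof -
  define k where "k = length p - 1"
  define E where "E = {(x,y). x < n \<and> y < n \<and> adj x y}"
  define f where "f = (\<lambda>i. (p ! i, p ! Suc i))"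
  define g where "g = (\<lambda>i. (p ! Suc i, p ! i))"
  have adjp: "\<And>i. i < k \<Longrightarrow> adj (p ! i) (p ! Suc i)" using w unfolding is_walk_def k_def by auto
  have adjn: "\<And>x y. adj x y \<Longrightarrow> x < n \<and> y < n" using sg unfolding simple_graph_def by blast
  have adjs: "\<And>x y. adj x y \<Longrightarrow> adj y x" using sg unfolding simple_graph_def by blast
  have kl: "\<And>i. i < k \<Longrightarrow> Suc i < length p" unfolding k_def by auto
  have neq: "\<And>i j. i < length p \<Longrightarrow> j < length p \<Longrightarrow> p ! i = p ! j \<Longrightarrow> i = j"
    using nth_eq_iff_index_eq[OF dp] by blast
  have injf: "inj_on f {..<k}"
  proof (rule inj_onI)
    fix i j assume "i \<in> {..<k}" "j \<in> {..<k}" "f i = f j"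
    then show "i = j" using neq[of i j] kl[of i] kl[of j] unfolding f_def by auto
  qed
  have injg: "inj_on g {..<k}"
  proof (rule inj_onI)
    fix i j assume "i \<in> {..<k}" "j \<in> {..<k}" "g i = g j"
    then show "i = j" using neq[of i j] kl[of i] kl[of j] unfolding g_def by auto
  qed
  have disj: "f ` {..<k} \<inter> g ` {..<k} = {}"
  proof (rule ccontr)
    assume "f ` {..<k} \<inter> g ` {..<k} \<noteq> {}"
    then obtain i j where "i < k" "j < k" "f i = g j" by blast
    then have "p ! i = p ! Suc j" "p ! Suc i = p ! j" unfolding f_def g_def by auto
    then have "i = Suc j" "Suc i = j" using neq[of i "Suc j"] neq[of "Suc i" j] kl[of i] kl[of j] \<open>i<k\<close> \<open>j<k\<close> by auto
    then show False by simp
  qed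
  have finE: "finite E" by (rule finite_subset[of _ "{..<n}\<times>{..<n}"]) (auto simp: E_def)
  have sub: "f ` {..<k} \<union> g ` {..<k} \<subseteq> E"
    unfolding E_def f_def g_def using adjp adjn adjs by auto
  have "2 * (\<Sum>i<k. h (p ! i) (p ! Suc i)) = (\<Sum>i<k. case_prod h (f i)) + (\<Sum>i<k. case_prod h (g i))"
    unfolding f_def g_def using hsym by simp
  also have "\<dots> = (\<Sum>e\<in>f ` {..<k}. case_prod h e) + (\<Sum>e\<in>g ` {..<k}. case_prod h e)"
    using sum.reindex[OF injf, of "case_prod h"] sum.reindex[OF injg, of "case_prod h"] by simp
  also have "\<dots> = (\<Sum>e\<in>f ` {..<k} \<union> g ` {..<k}. case_prod h e)"
    by (rule sum.union_disjoint[symmetric]) (use disj in auto)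
  also have "\<dots> \<le> (\<Sum>e\<in>E. case_prod h e)"
    by (rule sum_mono2[OF finE sub]) (use hnn in auto)
  also have "\<dots> = (\<Sum>x<n. \<Sum>y<n. if adj x y then h x y else 0)"
  proof -
    have "(\<Sum>x<n. \<Sum>y<n. if adj x y then h x y else 0) = (\<Sum>e\<in>{..<n}\<times>{..<n}. if case_prod adj e then case_prod h e else 0)"
      unfolding sum.cartesian_product by (rule sum.cong) (auto split: prod.splits)
    also have "\<dots> = (\<Sum>e\<in>({..<n}\<times>{..<n}) \<inter> {e. case_prod adj e}. case_prod h e)"
      by (simp add: sum.inter_restrict)
    also have "({..<n}\<times>{..<n}) \<inter> {e. case_prod adj e} = E" unfolding E_def by auto
    finally show ?thesis by simp
  qed
  finally show ?thesis unfolding k_def .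
qed



definition Kf :: "(nat \<Rightarrow> nat \<Rightarrow> bool) \<Rightarrow> nat \<Rightarrow> nat \<Rightarrow> nat \<Rightarrow> real" where
  "Kf adj r i j = (if adj i j then 1 else 0) + (if i = j \<and> i = r then 2 else 0)"

definition dv :: "nat \<Rightarrow> (nat \<Rightarrow> nat \<Rightarrow> bool) \<Rightarrow> nat \<Rightarrow> nat \<Rightarrow> real" where
  "dv n adj r i = real (deg_loop n adj r i)"

lemma sum_adj_ind: "(\<Sum>j<(n::nat). if adj i j then (1::real) else 0) = real (card {w. w < n \<and> adj i w})"
proof -
  have "(\<Sum>j<n. if adj i j then (1::real) else 0) = (\<Sum>j\<in>{..<n} \<inter> {j. adj i j}. 1)"
    using sum.inter_restrict[where A="{..<n}" and g="\<lambda>_. (1::real)" and B="{j. adj i j}"] by simp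
  also have "{..<n} \<inter> {j. adj i j} = {w. w < n \<and> adj i w}" by auto
  finally show ?thesis by simp
qed

lemma sum_delta_loop: "r < (n::nat) \<Longrightarrow> (\<Sum>j<n. if i = j \<and> i = r then (c::real) else 0) = (if i = r then c else 0)"
proof (cases "i = r")
  case True
  assume r: "r < n"
  have "(\<Sum>j<n. if i = j \<and> i = r then c else 0) = (\<Sum>j<n. if j = r then c else 0)"
    by (rule sum.cong) (auto simp: True)
  also have "\<dots> = c" using r by simp
  finally show ?thesis using True by simp
next
  case False
  then show ?thesis by simp
qed

lemma Kf_rowsum: "r < n \<Longrightarrow> (\<Sum>j<n. Kf adj r i j) = dv n adj r i"
  unfolding Kf_def dv_def deg_loop_def
  by (simp add: sum.distrib sum_adj_ind sum_delta_loop)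

lemma Kf_sym: "simple_graph n adj \<Longrightarrow> Kf adj r i j = Kf adj r j i"
  unfolding Kf_def simple_graph_def by auto

lemma Kf_nonneg: "Kf adj r i j \<ge> 0" unfolding Kf_def by auto

lemma dv_pos:
  assumes sg: "simple_graph n adj" and conn: "graph_connected n adj" and r: "r < n" and i: "i < n"
  shows "dv n adj r i > 0"
proof (cases "i = r")
  case True then show ?thesis unfolding dv_def deg_loop_def by simp
next
  case False
  obtain p where p: "is_walk adj p" "hd p = i" "last p = r"
    using conn i r unfolding graph_connected_def by blast
  have "length p \<noteq> 1"
  proof
    assume "length p = 1"
    then obtain a where "p = [a]" by (cases p) auto
    then show False using p False by simp
  qed
  moreover have "p \<noteq> []" using p unfolding is_walk_def by auto
  ultimately have l: "Suc 0 < length p" by (cases p) auto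
  then have "adj (p ! 0) (p ! Suc 0)" using p unfolding is_walk_def by auto
  moreover have "p ! 0 = i" using p \<open>p \<noteq> []\<close> by (simp add: hd_conv_nth)
  ultimately have a: "adj i (p ! Suc 0)" by simp
  then have "p ! Suc 0 \<in> {w. w < n \<and> adj i w}" using sg unfolding simple_graph_def by blast
  then have "card {w. w < n \<and> adj i w} > 0" by (subst card_gt_0_iff) auto
  then show ?thesis unfolding dv_def deg_loop_def by simp
qed

lemma dv_total:
  assumes sg: "simple_graph n adj" and r: "r < n"
  shows "(\<Sum>i<n. dv n adj r i) = 2 * real (num_edges_loop n adj)"
proof -
  define N where "N = (\<lambda>i. {w. w < n \<and> adj i w})"
  define Eu where "Eu = {(u, v). u < v \<and> v < n \<and> adj u v}"
  define sw where "sw = (\<lambda>(u::nat,v::nat). (v,u))"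
  have finN: "\<And>i. finite (N i)" unfolding N_def by auto
  have E: "(SIGMA i:{..<n}. N i) = Eu \<union> sw ` Eu"
  proof -
    { fix e :: "nat \<times> nat"
    obtain u v where e: "e = (u,v)" by (cases e)
    have "e \<in> (SIGMA i:{..<n}. N i) \<longleftrightarrow> u < n \<and> v < n \<and> adj u v" unfolding e N_def by auto
    also have "\<dots> \<longleftrightarrow> (u < v \<and> v < n \<and> adj u v) \<or> (v < u \<and> u < n \<and> adj v u)"
      using sg unfolding simple_graph_def by (metis linorder_neqE_nat order.strict_trans)
    also have "\<dots> \<longleftrightarrow> e \<in> Eu \<union> sw ` Eu" unfolding e Eu_def sw_def by (auto simp: image_iff)
    finally have "e \<in> (SIGMA i:{..<n}. N i) \<longleftrightarrow> e \<in> Eu \<union> sw ` Eu" .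
  } note eq = this
    then show ?thesis by blast
  qed
  have finEu: "finite Eu" by (rule finite_subset[of _ "{..<n}\<times>{..<n}"]) (auto simp: Eu_def)
  have injsw: "inj_on sw Eu" unfolding sw_def inj_on_def by auto
  have disj: "Eu \<inter> sw ` Eu = {}" unfolding Eu_def sw_def by auto
  have "card ((SIGMA i:{..<n}. N i)) = 2 * card Eu"
    unfolding E using card_Un_disjoint[OF finEu _ disj] card_image[OF injsw] finEu by simp
  moreover have "card ((SIGMA i:{..<n}. N i)) = (\<Sum>i<n. card (N i))"
    by (rule card_SigmaI) (auto simp: finN)
  ultimately have cs: "(\<Sum>i<n. real (card (N i))) = 2 * real (card Eu)"
    by (metis of_nat_sum of_nat_mult of_nat_numeral)
  have "(\<Sum>i<n. dv n adj r i) = (\<Sum>i<n. real (card (N i))) + (\<Sum>i<n. real (if i = r then 2 else 0))"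
    unfolding dv_def deg_loop_def N_def by (simp add: sum.distrib)
  also have "(\<Sum>i<n. real (if i = r then 2 else 0)) = 2" using r by (simp add: of_nat_sum[symmetric])
  finally show ?thesis unfolding num_edges_loop_def using cs Eu_def by simp
qed

lemma sumsq_le:
  fixes x :: "nat \<Rightarrow> real"
  shows "(\<Sum>i<k. x i)^2 \<le> real k * (\<Sum>i<k. (x i)^2)"
proof -
  have "0 \<le> (\<Sum>i<k. \<Sum>j<k. (x i - x j)^2)" by (intro sum_nonneg) auto
  also have "(\<Sum>i<k. \<Sum>j<k. (x i - x j)^2) = (\<Sum>i<k. \<Sum>j<k. (x i)^2 + (x j)^2 - 2 * (x i * x j))"
    by (simp add: power2_eq_square algebra_simps)
  also have "\<dots> = 2 * real k * (\<Sum>i<k. (x i)^2) - 2 * (\<Sum>i<k. x i)^2"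
    by (simp add: sum_subtractf sum.distrib sum_distrib_left sum_distrib_right power2_eq_square
        algebra_simps)
  finally show ?thesis by simp
qed

lemma alt_sum:
  fixes f :: "nat \<Rightarrow> real"
  shows "f 0 = (\<Sum>i<k. (-1)^i * (f i + f (Suc i))) + (-1)^k * f k"
  by (induction k) (simp_all add: algebra_simps)

lemma cs2:
  fixes s y q k :: real
  assumes "0 \<le> k" "0 \<le> q" "s^2 \<le> k * q" "0 \<le> s"
  shows "(s + y)^2 \<le> (k + 1/4) * (q + 4 * y^2)"
proof (cases "k = 0")
  case True
  then have "s = 0" using assms by simp
  then show ?thesis using True assms by simp
next
  case False
  then have k: "k > 0" using assms by simp
  have "4 * k * ((k + 1/4) * (q + 4 * y^2) - (s + y)^2) = (4*k + 1) * (k * q) + 16*k^2*y^2 - 4*k*s^2 - 8*k*s*y"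
    by (simp add: algebra_simps power2_eq_square)
  also have "\<dots> \<ge> (4*k + 1) * s^2 + 16*k^2*y^2 - 4*k*s^2 - 8*k*s*y"
    using assms k by (simp add: mult_left_mono)
  also have "(4*k + 1) * s^2 + 16*k^2*y^2 - 4*k*s^2 - 8*k*s*y = (s - 4*k*y)^2"
    by (simp add: algebra_simps power2_eq_square)
  finally have "(s - 4*k*y)^2 \<le> 4 * k * ((k + 1/4) * (q + 4 * y^2) - (s + y)^2)" .
  then have "0 \<le> 4 * k * ((k + 1/4) * (q + 4 * y^2) - (s + y)^2)" by (smt (verit) zero_le_power2)
  then show ?thesis using k by (simp add: zero_le_mult_iff)
qed



lemma fin_arith:
  fixes a S M c x D :: real
  assumes a: "0 < a" and S: "0 < S" and SM: "S \<le> 2 * M * a" and ac: "a \<le> c * x * S"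
    and c: "0 \<le> c" and cD: "2 * c \<le> 2 * D + 1" and M: "0 < M"
  shows "1 / ((2 * D + 1) * M) \<le> x"
proof -
  have cxS: "0 < c * x * S" using a ac by linarith
  then have cx: "0 < c * x" using S by (simp add: zero_less_mult_iff)
  then have x: "0 < x" using c by (simp add: zero_less_mult_iff)
  have "a \<le> (c * x) * S" using ac by simp
  also have "\<dots> \<le> (c * x) * (2 * M * a)" using SM cx by (simp add: mult_left_mono)
  finally have "a * 1 \<le> a * (2 * c * M * x)" by (simp add: algebra_simps)
  then have "1 \<le> 2 * c * M * x" using a by (simp add: mult_le_cancel_left)
  also have "2 * c * M * x = (2 * c) * (M * x)" by simp
  also have "\<dots> \<le> (2 * D + 1) * (M * x)" using cD M x by (simp add: mult_right_mono)
  finally have 1: "1 \<le> ((2 * D + 1) * M) * x" by (simp add: algebra_simps)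
  have c0: "0 < c" using cx c by (cases "c = 0") auto
  have "0 < (2 * D + 1) * M"
  proof -
    have "0 < 2 * D + 1" using cD c0 by linarith
    then show ?thesis using M by simp
  qed
  then show ?thesis using 1 by (simp add: divide_le_eq mult.commute)
qed

lemma spectral_real:
  fixes g :: "nat \<Rightarrow> real" and \<mu> :: real
  assumes sg: "simple_graph n adj" and conn: "graph_connected n adj" and r: "r < n"
    and eig: "\<And>i. i < n \<Longrightarrow> (\<Sum>j<n. Kf adj r i j * g j) = \<mu> * (dv n adj r i * g i)"
    and orth: "(\<Sum>i<n. dv n adj r i * g i) = 0"
    and i0: "i0 < n" and gi0: "g i0 \<noteq> 0"
  shows "1 / ((2 * real (diam n adj) + 1) * real (num_edges_loop n adj)) \<le> 1 - \<mu> \<and>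
         1 / ((2 * real (diam n adj) + 1) * real (num_edges_loop n adj)) \<le> 1 + \<mu>"
proof -
  define d where "d = dv n adj r"
  define K where "K = Kf adj r"
  define D where "D = real (diam n adj)"
  define M where "M = real (num_edges_loop n adj)"
  define S where "S = (\<Sum>i<n. d i * (g i)^2)"
  have dpos: "\<And>i. i < n \<Longrightarrow> 0 < d i" unfolding d_def using dv_pos[OF sg conn r] by blast
  have rows: "\<And>i. (\<Sum>j<n. K i j) = d i" unfolding K_def d_def using Kf_rowsum[OF r] by blast
  have Ksym: "\<And>i j. K i j = K j i" unfolding K_def using Kf_sym[OF sg] by blast
  have cols: "\<And>j. (\<Sum>i<n. K i j) = d j"
  proof -
    fix j
    have "(\<Sum>i<n. K i j) = (\<Sum>i<n. K j i)" by (rule sum.cong[OF refl], rule Ksym)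
    also have "\<dots> = d j" by (rule rows)
    finally show "(\<Sum>i<n. K i j) = d j" .
  qed
  have Mpos: "0 < M" unfolding M_def num_edges_loop_def by simp
  have dtot: "(\<Sum>i<n. d i) = 2 * M" unfolding d_def M_def using dv_total[OF sg r] .
  have cross: "(\<Sum>i<n. \<Sum>j<n. K i j * (g i * g j)) = \<mu> * S"
  proof -
    have "(\<Sum>i<n. \<Sum>j<n. K i j * (g i * g j)) = (\<Sum>i<n. g i * (\<Sum>j<n. K i j * g j))"
      by (simp add: sum_distrib_left algebra_simps)
    also have "\<dots> = (\<Sum>i<n. g i * (\<mu> * (d i * g i)))"
      by (rule sum.cong) (simp_all add: eig[unfolded K_def[symmetric] d_def[symmetric]])
    also have "\<dots> = \<mu> * S" unfolding S_def by (simp add: sum_distrib_left power2_eq_square algebra_simps)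
    finally show ?thesis .
  qed
  have sq1: "(\<Sum>i<n. \<Sum>j<n. K i j * (g i)^2) = S"
  proof -
    have "(\<Sum>i<n. \<Sum>j<n. K i j * (g i)^2) = (\<Sum>i<n. (\<Sum>j<n. K i j) * (g i)^2)"
      by (simp add: sum_distrib_right)
    also have "\<dots> = S" unfolding S_def rows by (simp add: algebra_simps)
    finally show ?thesis .
  qed
  have sq2: "(\<Sum>i<n. \<Sum>j<n. K i j * (g j)^2) = S"
  proof -
    have "(\<Sum>i<n. \<Sum>j<n. K i j * (g j)^2) = (\<Sum>j<n. \<Sum>i<n. K i j * (g j)^2)"
      by (rule sum.swap)
    also have "\<dots> = (\<Sum>j<n. (g j)^2 * (\<Sum>i<n. K i j))"
      by (simp add: sum_distrib_left algebra_simps)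
    also have "\<dots> = S" unfolding S_def cols by (simp add: algebra_simps)
    finally show ?thesis .
  qed
  have eminus: "(\<Sum>i<n. \<Sum>j<n. K i j * (g i - g j)^2) = 2 * S - 2 * \<mu> * S"
  proof -
    have "(\<Sum>i<n. \<Sum>j<n. K i j * (g i - g j)^2) =
       (\<Sum>i<n. \<Sum>j<n. K i j * (g i)^2 + K i j * (g j)^2 - 2 * (K i j * (g i * g j)))"
      by (simp add: power2_eq_square algebra_simps)
    also have "\<dots> = (\<Sum>i<n. \<Sum>j<n. K i j * (g i)^2) + (\<Sum>i<n. \<Sum>j<n. K i j * (g j)^2)
        - 2 * (\<Sum>i<n. \<Sum>j<n. K i j * (g i * g j))"
      by (simp add: sum_subtractf sum.distrib sum_distrib_left)
    finally show ?thesis using sq1 sq2 cross by simp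
  qed
  have eplus: "(\<Sum>i<n. \<Sum>j<n. K i j * (g i + g j)^2) = 2 * S + 2 * \<mu> * S"
  proof -
    have "(\<Sum>i<n. \<Sum>j<n. K i j * (g i + g j)^2) =
       (\<Sum>i<n. \<Sum>j<n. K i j * (g i)^2 + K i j * (g j)^2 + 2 * (K i j * (g i * g j)))"
      by (simp add: power2_eq_square algebra_simps)
    also have "\<dots> = (\<Sum>i<n. \<Sum>j<n. K i j * (g i)^2) + (\<Sum>i<n. \<Sum>j<n. K i j * (g j)^2)
        + 2 * (\<Sum>i<n. \<Sum>j<n. K i j * (g i * g j))"
      by (simp add: sum.distrib sum_distrib_left)
    finally show ?thesis using sq1 sq2 cross by simp
  qed
  have splitK: "\<And>h. (\<Sum>i<n. \<Sum>j<n. K i j * h i j) =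
      (\<Sum>i<n. \<Sum>j<n. if adj i j then h i j else 0) + 2 * h r r"
  proof -
    fix h :: "nat \<Rightarrow> nat \<Rightarrow> real"
    have "(\<Sum>i<n. \<Sum>j<n. K i j * h i j) =
      (\<Sum>i<n. (\<Sum>j<n. if adj i j then h i j else 0) + (\<Sum>j<n. if i = j \<and> i = r then 2 * h r r else 0))"
      unfolding K_def Kf_def by (intro sum.cong refl) (auto simp: sum.distrib[symmetric] intro!: sum.cong)
    also have "\<dots> = (\<Sum>i<n. (\<Sum>j<n. if adj i j then h i j else 0) + (if i = r then 2 * h r r else 0))"
      using sum_delta_loop[OF r] by simp
    also have "\<dots> = (\<Sum>i<n. \<Sum>j<n. if adj i j then h i j else 0) + 2 * h r r"
      using r by (simp add: sum.distrib)
    finally show "(\<Sum>i<n. \<Sum>j<n. K i j * h i j) =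
      (\<Sum>i<n. \<Sum>j<n. if adj i j then h i j else 0) + 2 * h r r" .
  qed
  define Am where "Am = (\<Sum>i<n. \<Sum>j<n. if adj i j then (g i - g j)^2 else 0)"
  define Ap where "Ap = (\<Sum>i<n. \<Sum>j<n. if adj i j then (g i + g j)^2 else 0)"
  have Am: "Am = 2 * S - 2 * \<mu> * S"
    using splitK[of "\<lambda>i j. (g i - g j)^2"] eminus unfolding Am_def by simp
  have Ap: "Ap + 8 * (g r)^2 = 2 * S + 2 * \<mu> * S"
    using splitK[of "\<lambda>i j. (g i + g j)^2"] eplus unfolding Ap_def by (simp add: power2_eq_square algebra_simps)
  have n0: "0 < n" using r by simp
  define m where "m = Max ((\<lambda>i. (g i)^2) ` {..<n})"
  have "m \<in> (\<lambda>i. (g i)^2) ` {..<n}" unfolding m_def using n0 by (intro Max_in) auto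
  then obtain z where z: "z < n" "(g z)^2 = m" by auto
  have zmax: "\<And>i. i < n \<Longrightarrow> (g i)^2 \<le> (g z)^2" unfolding z(2) m_def by (intro Max_ge) auto
  have gz: "0 < (g z)^2" using zmax[OF i0] gi0 by (smt (verit) zero_less_power2)
  have SM: "S \<le> 2 * M * (g z)^2"
  proof -
    have "S \<le> (\<Sum>i<n. d i * (g z)^2)" unfolding S_def
      by (intro sum_mono mult_left_mono zmax) (auto simp: dpos less_imp_le)
    also have "\<dots> = 2 * M * (g z)^2" using dtot by (simp add: sum_distrib_right[symmetric])
    finally show ?thesis .
  qed
  have Spos: "0 < S"
  proof -
    have "d z * (g z)^2 \<le> S" unfolding S_def
      by (rule member_le_sum[of z "{..<n}" "\<lambda>i. d i * (g i)^2"]) (use z dpos in \<open>auto simp: less_imp_le\<close>)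
    moreover have "0 < d z * (g z)^2" using dpos[OF z(1)] gz by simp
    ultimately show ?thesis by simp
  qed
  have path_le: "\<And>u v. u < n \<Longrightarrow> v < n \<Longrightarrow> \<exists>p. is_walk adj p \<and> distinct p \<and> p ! 0 = u \<and> p ! (length p - 1) = v
      \<and> length p - 1 \<le> diam n adj"
  proof -
    fix u v assume uv: "u < n" "v < n"
    obtain p where p: "is_walk adj p" "hd p = u" "last p = v" "distinct p" "length p = Suc (graph_dist adj u v)"
      using shortest_path[OF conn uv] by blast
    have "p \<noteq> []" using p(1) unfolding is_walk_def by simp
    then have "p ! 0 = u" "p ! (length p - 1) = v" using p by (simp_all add: hd_conv_nth last_conv_nth)
    moreover have "length p - 1 \<le> diam n adj" using p(5) dist_le_diam[OF uv, of adj] by simp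
    ultimately show "\<exists>p. is_walk adj p \<and> distinct p \<and> p ! 0 = u \<and> p ! (length p - 1) = v
      \<and> length p - 1 \<le> diam n adj" using p by blast
  qed
  have up: "1 / ((2 * D + 1) * M) \<le> 1 - \<mu>"
  proof -
    obtain w where w: "w < n" "g z * g w \<le> 0"
    proof (rule ccontr)
      assume "\<not> thesis"
      then have pos: "\<And>w. w < n \<Longrightarrow> 0 < g z * g w" using that by force
      have "0 < (\<Sum>w<n. d w * (g z * g w))"
        by (rule sum_pos) (use n0 dpos pos in auto)
      also have "(\<Sum>w<n. d w * (g z * g w)) = g z * (\<Sum>w<n. d w * g w)"
        by (simp add: sum_distrib_left algebra_simps)
      finally show False using orth unfolding d_def by simp
    qed
    obtain p where p: "is_walk adj p" "distinct p" "p ! 0 = z" "p ! (length p - 1) = w"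
        "length p - 1 \<le> diam n adj" using path_le[OF z(1) w(1)] by blast
    define k where "k = length p - 1"
    have tele: "g z - g w = (\<Sum>i<k. g (p ! i) - g (p ! Suc i))"
      using sum_lessThan_telescope'[of "\<lambda>i. g (p ! i)" k] p unfolding k_def by simp
    have e: "(g z - g w)^2 = (g z)^2 + ((g w)^2 - 2*(g z * g w))" by (simp add: power2_eq_square algebra_simps)
    have "(g z)^2 \<le> (g z - g w)^2" unfolding e using w(2) zero_le_power2[of "g w"] by linarith
    also have "\<dots> \<le> real k * (\<Sum>i<k. (g (p ! i) - g (p ! Suc i))^2)"
      unfolding tele by (rule sumsq_le)
    also have "\<dots> \<le> D * (Am / 2)"
    proof (rule mult_mono)
      show "real k \<le> D" unfolding D_def k_def using p(5) by simp
      show "(\<Sum>i<k. (g (p ! i) - g (p ! Suc i))^2) \<le> Am / 2"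
        using path_sum_bound[OF sg p(1) p(2), of "\<lambda>x y. (g x - g y)^2"] unfolding Am_def k_def
        by (simp add: power2_commute)
      show "0 \<le> D" unfolding D_def by simp
      show "0 \<le> (\<Sum>i<k. (g (p ! i) - g (p ! Suc i))^2)" by (simp add: sum_nonneg)
    qed
    also have "\<dots> = D * (1 - \<mu>) * S" unfolding Am by (simp add: field_simps)
    finally have "(g z)^2 \<le> D * (1 - \<mu>) * S" .
    then show ?thesis
      by (intro fin_arith[OF gz Spos SM _ _ _ Mpos, of D]) (auto simp: D_def)
  qed
  have low: "1 / ((2 * D + 1) * M) \<le> 1 + \<mu>"
  proof -
    obtain p where p: "is_walk adj p" "distinct p" "p ! 0 = z" "p ! (length p - 1) = r"
        "length p - 1 \<le> diam n adj" using path_le[OF z(1) r] by blast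
    define k where "k = length p - 1"
    define a where "a = (\<lambda>i. g (p ! i) + g (p ! Suc i))"
    define s where "s = (\<Sum>i<k. \<bar>a i\<bar>)"
    define q where "q = (\<Sum>i<k. (a i)^2)"
    have alt: "g z = (\<Sum>i<k. (-1)^i * a i) + (-1)^k * g r"
      using alt_sum[of "\<lambda>i. g (p ! i)" k] p unfolding k_def a_def by simp
    have absz: "\<bar>g z\<bar> \<le> s + \<bar>g r\<bar>"
    proof -
      have "\<bar>g z\<bar> \<le> \<bar>\<Sum>i<k. (-1)^i * a i\<bar> + \<bar>(-1)^k * g r\<bar>" unfolding alt by (rule abs_triangle_ineq)
      also have "\<bar>\<Sum>i<k. (-1)^i * a i\<bar> \<le> (\<Sum>i<k. \<bar>(-1)^i * a i\<bar>)" by (rule sum_abs)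
      also have "(\<Sum>i<k. \<bar>(-1)^i * a i\<bar>) = s" unfolding s_def by (simp add: abs_mult power_abs)
      also have "\<bar>(-1::real)^k * g r\<bar> = \<bar>g r\<bar>" by (simp add: abs_mult power_abs)
      finally show ?thesis by simp
    qed
    have h: "(\<Sum>i<k. \<bar>a i\<bar>)^2 \<le> real k * (\<Sum>i<k. \<bar>a i\<bar>^2)" by (rule sumsq_le)
    have sq: "s^2 \<le> real k * q"
      using h unfolding s_def q_def by simp
    have qb: "q \<le> Ap / 2"
      using path_sum_bound[OF sg p(1) p(2), of "\<lambda>x y. (g x + g y)^2"] unfolding Ap_def k_def q_def a_def
      by (simp add: add.commute)
    have "(g z)^2 = \<bar>g z\<bar>^2" by simp
    also have "\<dots> \<le> (s + \<bar>g r\<bar>)^2" using absz by (intro power_mono) auto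
    also have "\<dots> \<le> (real k + 1/4) * (q + 4 * \<bar>g r\<bar>^2)"
      by (rule cs2[OF _ _ sq]) (auto simp: q_def s_def sum_nonneg)
    also have "\<dots> \<le> (D + 1/4) * (Ap / 2 + 4 * (g r)^2)"
    proof (rule mult_mono)
      show "real k + 1/4 \<le> D + 1/4" unfolding D_def k_def using p(5) by simp
      show "q + 4 * \<bar>g r\<bar>^2 \<le> Ap / 2 + 4 * (g r)^2" using qb by simp
      show "0 \<le> D + 1/4" unfolding D_def by simp
      show "0 \<le> q + 4 * \<bar>g r\<bar>^2" unfolding q_def by (simp add: sum_nonneg)
    qed
    also have "\<dots> = (D + 1/4) * (1 + \<mu>) * S"
    proof -
      have "Ap / 2 + 4 * (g r)^2 = (1 + \<mu>) * S" using Ap by (simp add: algebra_simps)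
      then show ?thesis by simp
    qed
    finally have "(g z)^2 \<le> (D + 1/4) * (1 + \<mu>) * S" .
    then show ?thesis
      by (intro fin_arith[OF gz Spos SM _ _ _ Mpos, of "D + 1/4"]) (auto simp: D_def)
  qed
  show ?thesis using up low unfolding D_def M_def by simp
qed



lemma mult_entry:
  fixes A B :: "'a :: comm_ring_1 mat"
  assumes "A \<in> carrier_mat n n" "B \<in> carrier_mat n n" "i < n" "j < n"
  shows "(A * B) $$ (i,j) = (\<Sum>k<n. A $$ (i,k) * B $$ (k,j))"
  using assms by (simp add: scalar_prod_def atLeast0LessThan)

lemma sumS_left:
  fixes f :: "nat \<Rightarrow> 'a :: comm_ring_1"
  assumes "i < n" "0 < n"
  shows "(\<Sum>k<n. (if k = 0 then 1 else if i = k then 1 else 0) * f k) = f 0 + (if i \<noteq> 0 then f i else 0)"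
proof -
  have "(\<Sum>k<n. (if k = 0 then 1 else if i = k then 1 else 0) * f k) =
        (\<Sum>k<n. (if k = 0 then f k else 0) + (if k = i then (if i \<noteq> 0 then f i else 0) else 0))"
    by (rule sum.cong) auto
  also have "\<dots> = f 0 + (if i \<noteq> 0 then f i else 0)"
    using assms by (simp add: sum.distrib)
  finally show ?thesis .
qed

lemma sumS_right:
  fixes f :: "nat \<Rightarrow> 'a :: comm_ring_1"
  assumes "j < n"
  shows "(\<Sum>k<n. f k * (if j = 0 then 1 else if k = j then 1 else 0)) = (if j = 0 then (\<Sum>k<n. f k) else f j)"
proof (cases "j = 0")
  case True then show ?thesis by simp
next
  case False
  have "(\<Sum>k<n. f k * (if j = 0 then 1 else if k = j then 1 else 0)) = (\<Sum>k<n. if k = j then f k else 0)"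
    by (rule sum.cong) (use False in auto)
  also have "\<dots> = f j" using assms by simp
  finally show ?thesis using False by simp
qed

lemma char_poly_1x1: "char_poly (mat 1 1 (\<lambda>_. (c :: 'a :: comm_ring_1))) = [:-c, 1:]"
  by (simp add: char_poly_defs det_def sign_def)

lemma charpoly_split:
  fixes P :: "complex mat" and pi :: "nat \<Rightarrow> complex"
  assumes P: "P \<in> carrier_mat n n" and n: "0 < n"
    and rows: "\<And>i. i < n \<Longrightarrow> (\<Sum>j<n. P $$ (i,j)) = 1"
    and pis: "(\<Sum>j<n. pi j) = 1"
  shows "\<exists>Q. char_poly P = [:-1,1:] * Q \<and> char_poly (mat n n (\<lambda>(i,j). P $$ (i,j) - pi j)) = [:0,1:] * Q"
proof -
  define B where "B = mat n n (\<lambda>(i,j). P $$ (i,j) - pi j)"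
  define S :: "complex mat" where "S = mat n n (\<lambda>(i,j). if j = 0 then 1 else if i = j then 1 else 0)"
  define Si :: "complex mat" where "Si = mat n n (\<lambda>(i,j). (if i = j then 1 else 0) - (if j = 0 \<and> i \<noteq> 0 then 1 else 0))"
  define C :: "complex mat" where "C = mat n n (\<lambda>(i,j). if j = 0 then (if i = 0 then 1 else 0)
       else P $$ (i,j) - (if i \<noteq> 0 then P $$ (0,j) else 0))"
  define C' :: "complex mat" where "C' = mat n n (\<lambda>(i,j). if j = 0 then 0
       else if i = 0 then P $$ (0,j) - pi j else P $$ (i,j) - P $$ (0,j))"
  have B: "B \<in> carrier_mat n n" and S: "S \<in> carrier_mat n n" and Si: "Si \<in> carrier_mat n n"
    and C: "C \<in> carrier_mat n n" and C': "C' \<in> carrier_mat n n"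
    unfolding B_def S_def Si_def C_def C'_def by auto
  have SSi: "S * Si = 1\<^sub>m n"
  proof (rule eq_matI)
    fix i j assume ij: "i < dim_row (1\<^sub>m n :: complex mat)" "j < dim_col (1\<^sub>m n :: complex mat)"
    then have i: "i < n" and j: "j < n" by auto
    have "(S * Si) $$ (i,j) = (\<Sum>k<n. S $$ (i,k) * Si $$ (k,j))" by (rule mult_entry[OF S Si i j])
    also have "\<dots> = (\<Sum>k<n. (if k = 0 then 1 else if i = k then 1 else 0) * Si $$ (k,j))"
      by (rule sum.cong) (auto simp: S_def i j)
    also have "\<dots> = Si $$ (0,j) + (if i \<noteq> 0 then Si $$ (i,j) else 0)" by (rule sumS_left[OF i n])
    also have "\<dots> = (1\<^sub>m n :: complex mat) $$ (i,j)" using i j n unfolding Si_def by auto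
    finally show "(S * Si) $$ (i,j) = (1\<^sub>m n :: complex mat) $$ (i,j)" .
  qed (use S Si in auto)
  have SiS: "Si * S = 1\<^sub>m n"
  proof (rule eq_matI)
    fix i j assume ij: "i < dim_row (1\<^sub>m n :: complex mat)" "j < dim_col (1\<^sub>m n :: complex mat)"
    then have i: "i < n" and j: "j < n" by auto
    have "(Si * S) $$ (i,j) = (\<Sum>k<n. Si $$ (i,k) * S $$ (k,j))" by (rule mult_entry[OF Si S i j])
    also have "\<dots> = (\<Sum>k<n. Si $$ (i,k) * (if j = 0 then 1 else if k = j then 1 else 0))"
      by (rule sum.cong) (auto simp: S_def i j)
    also have "\<dots> = (if j = 0 then (\<Sum>k<n. Si $$ (i,k)) else Si $$ (i,j))" by (rule sumS_right[OF j])
    also have "\<dots> = (1\<^sub>m n :: complex mat) $$ (i,j)"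
    proof (cases "j = 0")
      case True
      have "(\<Sum>k<n. Si $$ (i,k)) = (\<Sum>k<n. (if k = i then 1 else 0) - (if k = 0 then (if i \<noteq> 0 then 1 else 0) else 0))"
        by (rule sum.cong) (auto simp: Si_def i)
      also have "\<dots> = 1 - (if i \<noteq> 0 then 1 else 0)" using i n by (simp add: sum_subtractf)
      finally show ?thesis using True i j by auto
    next
      case False then show ?thesis using i j unfolding Si_def by auto
    qed
    finally show "(Si * S) $$ (i,j) = (1\<^sub>m n :: complex mat) $$ (i,j)" .
  qed (use S Si in auto)
  have PS: "P * S = S * C"
  proof (rule eq_matI)
    fix i j assume ij: "i < dim_row (S * C)" "j < dim_col (S * C)"
    then have i: "i < n" and j: "j < n" using S C by auto
    have "(P * S) $$ (i,j) = (\<Sum>k<n. P $$ (i,k) * S $$ (k,j))" by (rule mult_entry[OF P S i j])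
    also have "\<dots> = (\<Sum>k<n. P $$ (i,k) * (if j = 0 then 1 else if k = j then 1 else 0))"
      by (rule sum.cong) (auto simp: S_def i j)
    also have "\<dots> = (if j = 0 then (\<Sum>k<n. P $$ (i,k)) else P $$ (i,j))" by (rule sumS_right[OF j])
    also have "\<dots> = (if j = 0 then 1 else P $$ (i,j))" using rows[OF i] by simp
    also have "\<dots> = C $$ (0,j) + (if i \<noteq> 0 then C $$ (i,j) else 0)" using i j n unfolding C_def by auto
    also have "\<dots> = (\<Sum>k<n. (if k = 0 then 1 else if i = k then 1 else 0) * C $$ (k,j))"
      by (rule sumS_left[OF i n, symmetric])
    also have "\<dots> = (\<Sum>k<n. S $$ (i,k) * C $$ (k,j))"
      by (rule sum.cong) (auto simp: S_def i j)
    also have "\<dots> = (S * C) $$ (i,j)" by (rule mult_entry[OF S C i j, symmetric])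
    finally show "(P * S) $$ (i,j) = (S * C) $$ (i,j)" .
  qed (use P S C in auto)
  have BS: "B * S = S * C'"
  proof (rule eq_matI)
    fix i j assume ij: "i < dim_row (S * C')" "j < dim_col (S * C')"
    then have i: "i < n" and j: "j < n" using S C' by auto
    have "(B * S) $$ (i,j) = (\<Sum>k<n. B $$ (i,k) * S $$ (k,j))" by (rule mult_entry[OF B S i j])
    also have "\<dots> = (\<Sum>k<n. B $$ (i,k) * (if j = 0 then 1 else if k = j then 1 else 0))"
      by (rule sum.cong) (auto simp: S_def i j)
    also have "\<dots> = (if j = 0 then (\<Sum>k<n. B $$ (i,k)) else B $$ (i,j))" by (rule sumS_right[OF j])
    also have "(\<Sum>k<n. B $$ (i,k)) = (\<Sum>k<n. P $$ (i,k) - pi k)"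
      by (rule sum.cong) (auto simp: B_def i)
    also have "\<dots> = 0" using rows[OF i] pis by (simp add: sum_subtractf)
    also have "(if j = 0 then 0 else B $$ (i,j)) = C' $$ (0,j) + (if i \<noteq> 0 then C' $$ (i,j) else 0)"
      using i j n unfolding C'_def B_def by auto
    also have "\<dots> = (\<Sum>k<n. (if k = 0 then 1 else if i = k then 1 else 0) * C' $$ (k,j))"
      by (rule sumS_left[OF i n, symmetric])
    also have "\<dots> = (\<Sum>k<n. S $$ (i,k) * C' $$ (k,j))"
      by (rule sum.cong) (auto simp: S_def i j)
    also have "\<dots> = (S * C') $$ (i,j)" by (rule mult_entry[OF S C' i j, symmetric])
    finally show "(B * S) $$ (i,j) = (S * C') $$ (i,j)" .
  qed (use B S C' in auto)
  have simP: "similar_mat P C"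
  proof (rule similar_matI[of P C S Si n])
    show "{P, C, S, Si} \<subseteq> carrier_mat n n" using P C S Si by auto
    show "S * Si = 1\<^sub>m n" by (rule SSi)
    show "Si * S = 1\<^sub>m n" by (rule SiS)
    have "S * C * Si = P * S * Si" using PS by simp
    also have "\<dots> = P * (S * Si)" using P S Si by simp
    also have "\<dots> = P" using SSi P by simp
    finally show "P = S * C * Si" by simp
  qed
  have simB: "similar_mat B C'"
  proof (rule similar_matI[of B C' S Si n])
    show "{B, C', S, Si} \<subseteq> carrier_mat n n" using B C' S Si by auto
    show "S * Si = 1\<^sub>m n" by (rule SSi)
    show "Si * S = 1\<^sub>m n" by (rule SiS)
    have "S * C' * Si = B * S * Si" using BS by simp
    also have "\<dots> = B * (S * Si)" using B S Si by simp
    also have "\<dots> = B" using SSi B by simp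
    finally show "B = S * C' * Si" by simp
  qed
  define m where "m = n - 1"
  have nm: "n = 1 + m" unfolding m_def using n by simp
  define D :: "complex mat" where "D = mat m m (\<lambda>(i,j). C $$ (Suc i, Suc j))"
  have Dc: "D \<in> carrier_mat m m" unfolding D_def by simp
  have C4: "C = four_block_mat (mat 1 1 (\<lambda>_. 1)) (mat 1 m (\<lambda>(i,j). C $$ (0, Suc j))) (0\<^sub>m m 1) D"
    by (rule eq_matI) (auto simp: D_def C_def nm)
  have C'4: "C' = four_block_mat (mat 1 1 (\<lambda>_. 0)) (mat 1 m (\<lambda>(i,j). C' $$ (0, Suc j))) (0\<^sub>m m 1) D"
    by (rule eq_matI) (auto simp: D_def C_def C'_def nm)
  have "char_poly C = [:-1,1:] * char_poly D"
    by (subst C4, subst char_poly_four_block_zeros_col) (auto simp: Dc char_poly_1x1[of "1::complex", simplified])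
  moreover have "char_poly C' = [:0,1:] * char_poly D"
    by (subst C'4, subst char_poly_four_block_zeros_col) (auto simp: Dc char_poly_1x1[of "0::complex", simplified])
  ultimately show ?thesis using char_poly_similar[OF simP] char_poly_similar[OF simB] unfolding B_def by auto
qed



lemma eig_bound:
  fixes v :: "nat \<Rightarrow> complex" and lam :: complex
  assumes sg: "simple_graph n adj" and conn: "graph_connected n adj" and r: "r < n"
    and hyp: "\<And>i. i < n \<Longrightarrow> (\<Sum>j<n. (complex_of_real (Kf adj r i j / dv n adj r i)
          - complex_of_real (dv n adj r j / (2 * real (num_edges_loop n adj)))) * v j) = lam * v i"
    and i0: "i0 < n" and vi0: "v i0 \<noteq> 0" and l0: "lam \<noteq> 0"
  shows "cmod lam \<le> 1 - 1 / ((2 * real (diam n adj) + 1) * real (num_edges_loop n adj))"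
proof -
  define d where "d = dv n adj r"
  define K where "K = Kf adj r"
  define M where "M = real (num_edges_loop n adj)"
  define T where "T = 2 * M"
  have dpos: "\<And>i. i < n \<Longrightarrow> 0 < d i" unfolding d_def using dv_pos[OF sg conn r] by blast
  have rows: "\<And>i. (\<Sum>j<n. K i j) = d i" unfolding K_def d_def using Kf_rowsum[OF r] by blast
  have Ksym: "\<And>i j. K i j = K j i" unfolding K_def using Kf_sym[OF sg] by blast
  have cols: "\<And>j. (\<Sum>i<n. K i j) = d j"
  proof -
    fix j
    have "(\<Sum>i<n. K i j) = (\<Sum>i<n. K j i)" by (rule sum.cong[OF refl], rule Ksym)
    also have "\<dots> = d j" by (rule rows)
    finally show "(\<Sum>i<n. K i j) = d j" .
  qed
  have Tpos: "0 < T" unfolding T_def M_def num_edges_loop_def by simp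
  have dtot: "(\<Sum>i<n. d i) = T" unfolding d_def T_def M_def using dv_total[OF sg r] .
  have hyp': "\<And>i. i < n \<Longrightarrow> (\<Sum>j<n. (of_real (K i j) / of_real (d i) - of_real (d j) / of_real T) * v j) = lam * v i"
    using hyp unfolding K_def d_def T_def M_def by simp
  have orth: "(\<Sum>i<n. of_real (d i) * v i) = 0"
  proof -
    have "lam * (\<Sum>i<n. of_real (d i) * v i) = (\<Sum>i<n. of_real (d i) * (lam * v i))"
      by (simp add: sum_distrib_left algebra_simps)
    also have "\<dots> = (\<Sum>i<n. of_real (d i) * (\<Sum>j<n. (of_real (K i j) / of_real (d i) - of_real (d j) / of_real T) * v j))"
      by (rule sum.cong) (simp_all add: hyp')
    also have "\<dots> = (\<Sum>i<n. \<Sum>j<n. (of_real (K i j) - of_real (d i) * of_real (d j) / of_real T) * v j)"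
    proof (rule sum.cong[OF refl])
      fix i assume "i \<in> {..<n}"
      then have di: "complex_of_real (d i) \<noteq> 0" using dpos by force
      show "of_real (d i) * (\<Sum>j<n. (of_real (K i j) / of_real (d i) - of_real (d j) / of_real T) * v j)
          = (\<Sum>j<n. (of_real (K i j) - of_real (d i) * of_real (d j) / of_real T) * v j)"
        unfolding sum_distrib_left by (rule sum.cong) (use di in \<open>simp_all add: field_simps\<close>)
    qed
    also have "\<dots> = (\<Sum>j<n. \<Sum>i<n. (of_real (K i j) - of_real (d i) * of_real (d j) / of_real T) * v j)"
      by (rule sum.swap)
    also have "\<dots> = (\<Sum>j<n. ((\<Sum>i<n. complex_of_real (K i j)) - (\<Sum>i<n. of_real (d i) * of_real (d j) / of_real T)) * v j)"
      by (intro sum.cong refl) (simp only: sum_subtractf[symmetric] sum_distrib_right)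
    also have "\<dots> = 0"
    proof (rule sum.neutral, rule ballI)
      fix j assume "j \<in> {..<n}"
      have a: "(\<Sum>i<n. complex_of_real (K i j)) = of_real (\<Sum>i<n. K i j)" by simp
      have b: "(\<Sum>i<n. complex_of_real (d i) * of_real (d j) / of_real T) = (\<Sum>i<n. complex_of_real (d i)) * of_real (d j) / of_real T"
        by (simp add: sum_distrib_right sum_divide_distrib)
      have c: "(\<Sum>i<n. complex_of_real (d i)) = of_real T" using dtot by (metis of_real_sum)
      have "complex_of_real T \<noteq> 0" using Tpos by simp
      then show "((\<Sum>i<n. complex_of_real (K i j)) - (\<Sum>i<n. of_real (d i) * of_real (d j) / of_real T)) * v j = 0"
        unfolding a b c cols by simp
    qed
    finally show ?thesis using l0 by simp
  qed
  have eig: "\<And>i. i < n \<Longrightarrow> (\<Sum>j<n. of_real (K i j) * v j) = lam * (of_real (d i) * v i)"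
  proof -
    fix i assume i: "i < n"
    then have di: "complex_of_real (d i) \<noteq> 0" using dpos by force
    have "(\<Sum>j<n. of_real (d j) / of_real T * v j) = (\<Sum>j<n. of_real (d j) * v j) / of_real T"
      by (simp add: sum_divide_distrib)
    also have "\<dots> = 0" using orth by simp
    finally have z: "(\<Sum>j<n. of_real (d j) / of_real T * v j) = 0" .
    have "lam * v i = (\<Sum>j<n. of_real (K i j) / of_real (d i) * v j) - (\<Sum>j<n. of_real (d j) / of_real T * v j)"
      unfolding hyp'[OF i, symmetric] by (simp add: algebra_simps sum_subtractf)
    also have "\<dots> = (\<Sum>j<n. of_real (K i j) * v j) / of_real (d i)"
      unfolding z by (simp add: sum_divide_distrib)
    finally show "(\<Sum>j<n. of_real (K i j) * v j) = lam * (of_real (d i) * v i)"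
      using di by (simp add: field_simps)
  qed
  define N where "N = (\<Sum>i<n. d i * (cmod (v i))^2)"
  have Npos: "0 < N"
  proof -
    have "d i0 * (cmod (v i0))^2 \<le> N" unfolding N_def
      by (rule member_le_sum[of i0 "{..<n}" "\<lambda>i. d i * (cmod (v i))^2"]) (use i0 dpos in \<open>auto simp: less_imp_le\<close>)
    moreover have "0 < d i0 * (cmod (v i0))^2" using dpos[OF i0] vi0 by simp
    ultimately show ?thesis by simp
  qed
  define T2 where "T2 = (\<Sum>i<n. \<Sum>j<n. of_real (K i j) * (cnj (v i) * v j))"
  have T2a: "T2 = lam * of_real N"
  proof -
    have "T2 = (\<Sum>i<n. cnj (v i) * (\<Sum>j<n. of_real (K i j) * v j))"
      unfolding T2_def by (simp add: sum_distrib_left algebra_simps)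
    also have "\<dots> = (\<Sum>i<n. cnj (v i) * (lam * (of_real (d i) * v i)))"
      by (rule sum.cong) (simp_all add: eig)
    also have "\<dots> = lam * (\<Sum>i<n. of_real (d i) * (v i * cnj (v i)))"
      by (simp add: sum_distrib_left algebra_simps)
    also have "\<dots> = lam * of_real N"
      unfolding N_def by (simp add: complex_norm_square[symmetric])
    finally show ?thesis .
  qed
  have T2c: "cnj T2 = T2"
  proof -
    have "cnj T2 = (\<Sum>i<n. \<Sum>j<n. of_real (K i j) * (v i * cnj (v j)))"
      unfolding T2_def by simp
    also have "\<dots> = (\<Sum>j<n. \<Sum>i<n. of_real (K i j) * (v i * cnj (v j)))" by (rule sum.swap)
    also have "\<dots> = T2" unfolding T2_def
      by (intro sum.cong refl) (simp add: Ksym mult.commute)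
    finally show ?thesis .
  qed
  have lr: "cnj lam = lam"
  proof -
    have "cnj lam * of_real N = lam * of_real N" using T2a T2c by (metis complex_cnj_complex_of_real complex_cnj_mult)
    then show ?thesis using Npos by simp
  qed
  define \<mu> where "\<mu> = Re lam"
  have lmu: "lam = of_real \<mu>" unfolding \<mu>_def using lr by (simp add: complex_eq_iff)
  have eigR: "\<And>i. i < n \<Longrightarrow> (\<Sum>j<n. K i j * Re (v j)) = \<mu> * (d i * Re (v i))"
  proof -
    fix i assume "i < n"
    from arg_cong[OF eig[OF this], of Re] show "(\<Sum>j<n. K i j * Re (v j)) = \<mu> * (d i * Re (v i))"
      unfolding lmu by simp
  qed
  have eigI: "\<And>i. i < n \<Longrightarrow> (\<Sum>j<n. K i j * Im (v j)) = \<mu> * (d i * Im (v i))"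
  proof -
    fix i assume "i < n"
    from arg_cong[OF eig[OF this], of Im] show "(\<Sum>j<n. K i j * Im (v j)) = \<mu> * (d i * Im (v i))"
      unfolding lmu by simp
  qed
  have orthR: "(\<Sum>i<n. d i * Re (v i)) = 0" using arg_cong[OF orth, of Re] by simp
  have orthI: "(\<Sum>i<n. d i * Im (v i)) = 0" using arg_cong[OF orth, of Im] by simp
  have bnd: "1 / ((2 * real (diam n adj) + 1) * M) \<le> 1 - \<mu> \<and> 1 / ((2 * real (diam n adj) + 1) * M) \<le> 1 + \<mu>"
  proof (cases "Re (v i0) = 0")
    case False
    show ?thesis using spectral_real[OF sg conn r, of "\<lambda>j. Re (v j)" \<mu>, OF _ _ i0 False] eigR orthR
      unfolding K_def d_def M_def by blast
  next
    case True
    then have "Im (v i0) \<noteq> 0" using vi0 by (simp add: complex_eq_iff)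
    then show ?thesis using spectral_real[OF sg conn r, of "\<lambda>j. Im (v j)" \<mu>, OF _ _ i0] eigI orthI
      unfolding K_def d_def M_def by blast
  qed
  have "cmod lam = \<bar>\<mu>\<bar>" unfolding lmu by simp
  then show ?thesis using bnd unfolding M_def by linarith
qed



lemma prod_root: "(x::complex) \<in> set evs \<Longrightarrow> poly (\<Prod>a\<leftarrow>evs. [:- a, 1:]) x = 0"
  by (induction evs) auto

lemma prod_count_dvd: "[:- (x::complex), 1:] ^ count (mset evs) x dvd (\<Prod>a\<leftarrow>evs. [:- a, 1:])"
proof (induction evs)
  case Nil then show ?case by simp
next
  case (Cons a evs)
  have e2: "(\<Prod>b\<leftarrow>a # evs. [:- b, 1:]) = [:- a, 1:] * (\<Prod>b\<leftarrow>evs. [:- b, 1:])"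
    by (simp only: list.map(2) prod_list.Cons)
  show ?case
  proof (cases "a = x")
    case True
    have e1: "[:- x, 1:] ^ count (mset (a # evs)) x = [:- a, 1:] * [:- x, 1:] ^ count (mset evs) x"
      by (simp only: mset.simps(2) count_add_mset True if_True power_Suc simp_thms)
    show ?thesis unfolding e1 e2 by (rule mult_dvd_mono[OF dvd_refl Cons.IH])
  next
    case False
    have e1: "count (mset (a # evs)) x = count (mset evs) x" using False by simp
    show ?thesis unfolding e1 e2 by (rule dvd_mult[OF Cons.IH])
  qed
qed

theorem mainTheorem7:
  fixes n :: nat and adj :: "nat \<Rightarrow> nat \<Rightarrow> bool" and r :: nat and evs :: "complex list"
  assumes "is_tree n adj"
    and "r < n"
    and "char_poly (map_mat complex_of_real (srw_matrix n adj r)) = (\<Prod>a\<leftarrow>evs. [:- a, 1:])"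
  shows "0 < abs_spectral_gap evs \<and>
         relaxation_time evs \<le> real ((2 * diam n adj + 1) * num_edges_loop n adj)"
proof -
  have n0: "0 < n" and sg: "simple_graph n adj" and conn: "graph_connected n adj"
    using assms(1) unfolding is_tree_def by auto
  note r = assms(2)
  define P where "P = map_mat complex_of_real (srw_matrix n adj r)"
  define M where "M = real (num_edges_loop n adj)"
  define D where "D = real (diam n adj)"
  define pi where "pi = (\<lambda>j. complex_of_real (dv n adj r j / (2 * M)))"
  define \<gamma> where "\<gamma> = 1 / ((2 * D + 1) * M)"
  have M1: "1 \<le> M" unfolding M_def num_edges_loop_def by simp
  have D0: "0 \<le> D" unfolding D_def by simp
  have g0: "0 < \<gamma>" unfolding \<gamma>_def using M1 D0 by simp
  have g1: "\<gamma> \<le> 1"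
  proof -
    have "1 \<le> 2 * D + 1" using D0 by simp
    then have "1 * 1 \<le> (2 * D + 1) * M" by (rule mult_mono) (use M1 D0 in auto)
    then have "1 \<le> (2 * D + 1) * M" by simp
    then show ?thesis unfolding \<gamma>_def by simp
  qed
  have Pc: "P \<in> carrier_mat n n" unfolding P_def srw_matrix_def by simp
  have Pij: "\<And>i j. i < n \<Longrightarrow> j < n \<Longrightarrow> P $$ (i,j) = complex_of_real (Kf adj r i j / dv n adj r i)"
    unfolding P_def srw_matrix_def Kf_def dv_def by simp
  have rowsP: "\<And>i. i < n \<Longrightarrow> (\<Sum>j<n. P $$ (i,j)) = 1"
  proof -
    fix i assume i: "i < n"
    have "(\<Sum>j<n. P $$ (i,j)) = (\<Sum>j<n. complex_of_real (Kf adj r i j / dv n adj r i))"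
      by (rule sum.cong) (simp_all add: Pij i)
    also have "\<dots> = of_real ((\<Sum>j<n. Kf adj r i j) / dv n adj r i)"
      by (simp add: sum_divide_distrib)
    also have "\<dots> = 1" using Kf_rowsum[OF r, of adj i] dv_pos[OF sg conn r i] by simp
    finally show "(\<Sum>j<n. P $$ (i,j)) = 1" .
  qed
  have pis: "(\<Sum>j<n. pi j) = 1"
  proof -
    have "(\<Sum>j<n. pi j) = of_real ((\<Sum>j<n. dv n adj r j) / (2 * M))"
      unfolding pi_def by (simp add: sum_divide_distrib)
    also have "\<dots> = 1" using dv_total[OF sg r] M1 unfolding M_def by simp
    finally show ?thesis .
  qed
  define B where "B = mat n n (\<lambda>(i,j). P $$ (i,j) - pi j)"
  obtain Q where Q1: "char_poly P = [:-1,1:] * Q" and Q2: "char_poly B = [:0,1:] * Q"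
    using charpoly_split[OF Pc n0 rowsP pis] unfolding B_def by blast
  have Bc: "B \<in> carrier_mat n n" unfolding B_def by simp
  have bound: "\<And>lam. poly Q lam = 0 \<Longrightarrow> cmod lam \<le> 1 - \<gamma>"
  proof -
    fix lam assume lQ: "poly Q lam = 0"
    show "cmod lam \<le> 1 - \<gamma>"
    proof (cases "lam = 0")
      case True then show ?thesis using g1 by simp
    next
      case False
      have "poly (char_poly B) lam = 0" using lQ unfolding Q2 by simp
      then have "eigenvalue B lam" using eigenvalue_root_char_poly[OF Bc] by simp
      then obtain vv where ev: "eigenvector B vv lam" unfolding eigenvalue_def by blast
      then have vv: "vv \<in> carrier_vec n" "vv \<noteq> 0\<^sub>v n" "B *\<^sub>v vv = lam \<cdot>\<^sub>v vv"
        unfolding eigenvector_def using Bc by auto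
      obtain i0 where i0: "i0 < n" "vv $ i0 \<noteq> 0"
      proof (rule ccontr)
        assume "\<not> thesis"
        then have "\<And>i. i < n \<Longrightarrow> vv $ i = 0" using that by blast
        then have "vv = 0\<^sub>v n" using vv(1) by (intro eq_vecI) auto
        then show False using vv(2) by simp
      qed
      have hyp: "\<And>i. i < n \<Longrightarrow> (\<Sum>j<n. (complex_of_real (Kf adj r i j / dv n adj r i)
          - complex_of_real (dv n adj r j / (2 * real (num_edges_loop n adj)))) * vv $ j) = lam * vv $ i"
      proof -
        fix i assume i: "i < n"
        have "(B *\<^sub>v vv) $ i = (\<Sum>j<n. B $$ (i,j) * vv $ j)"
          using i vv(1) Bc by (simp add: scalar_prod_def atLeast0LessThan)
        also have "\<dots> = (\<Sum>j<n. (complex_of_real (Kf adj r i j / dv n adj r i)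
          - complex_of_real (dv n adj r j / (2 * real (num_edges_loop n adj)))) * vv $ j)"
          by (rule sum.cong) (simp_all add: B_def i Pij pi_def M_def)
        finally show "(\<Sum>j<n. (complex_of_real (Kf adj r i j / dv n adj r i)
          - complex_of_real (dv n adj r j / (2 * real (num_edges_loop n adj)))) * vv $ j) = lam * vv $ i"
          using vv(3) i vv(1) by simp
      qed
      show ?thesis using eig_bound[OF sg conn r hyp i0 False] unfolding \<gamma>_def D_def M_def .
    qed
  qed
  have roots: "\<And>lam. lam \<in> set_mset (mset evs - {#1#}) \<Longrightarrow> poly Q lam = 0"
  proof -
    fix lam assume lam: "lam \<in> set_mset (mset evs - {#1#})"
    show "poly Q lam = 0"
    proof (cases "lam = 1")
      case False
      have "lam \<in># mset evs" using lam by (rule in_diffD)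
      then have "lam \<in> set evs" by simp
      then have "poly (char_poly P) lam = 0" unfolding P_def assms(3) by (rule prod_root)
      then show ?thesis using False unfolding Q1 by simp
    next
      case True
      have "1 \<in># mset evs - {#1#}" using lam True by simp
      then have "0 < count (mset evs - {#1#}) 1" by (simp only: count_greater_zero_iff)
      then have "0 < count (mset evs) 1 - count {#1::complex#} 1" by (simp only: count_diff)
      then have "0 < count (mset evs) 1 - 1" by (simp only: count_single if_True simp_thms)
      then have c2: "2 \<le> count (mset evs) 1" by arith
      have "[:- 1, 1:] ^ 2 dvd (\<Prod>a\<leftarrow>evs. [:- a, 1:])"
        by (rule power_le_dvd[OF prod_count_dvd c2])
      then have "[:- 1, 1:] * [:- 1, 1:] dvd [:- 1, 1:] * (Q :: complex poly)"
        using Q1 assms(3) unfolding P_def by (simp add: power2_eq_square)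
      then have h: "[:- 1, 1:] = (0 :: complex poly) \<or> [:- 1, 1:] dvd Q" by (simp only: dvd_mult_cancel_left)
      have "[:- 1, 1:] \<noteq> (0 :: complex poly)" by simp
      with h have "[:- 1, 1:] dvd Q" by blast
      then have "poly Q (- (- 1)) = 0" by (simp only: dvd_iff_poly_eq_0)
      then show ?thesis using True by simp
    qed
  qed
  define X where "X = insert 0 (cmod ` set_mset (mset evs - {#1#}))"
  have mx: "Max X \<le> 1 - \<gamma>"
    unfolding X_def using g1 roots bound by (subst Max_le_iff) auto
  have gap: "\<gamma> \<le> abs_spectral_gap evs" unfolding abs_spectral_gap_def using mx unfolding X_def by linarith
  then have gpos: "0 < abs_spectral_gap evs" using g0 by simp
  have "relaxation_time evs = 1 / abs_spectral_gap evs" unfolding relaxation_time_def ..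
  also have "\<dots> \<le> 1 / \<gamma>" using gap g0 by (simp add: frac_le)
  also have "\<dots> = (2 * D + 1) * M" unfolding \<gamma>_def by simp
  also have "\<dots> = real ((2 * diam n adj + 1) * num_edges_loop n adj)" unfolding D_def M_def by (simp add: algebra_simps)
  finally show ?thesis using gpos by simp
qed


end
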